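(* Let $\rho,p:\mathbb R^3\to\mathbb R$ and $H:\mathbb R^3\to\mathbb R^3$ be smooth with $\rho>0$, let $\gamma$ be a constant, and let $P$ be the $3\times3$ second order operator on $\mathbb R_t\times\mathbb R^3_x$ acting on $\beta(t,x)$ by $P\beta=-\rho\partial_t^2\beta+\gamma\nabla(p\operatorname{div}\beta)+\nabla(\beta\cdot\nabla p)+(\nabla\times(\nabla\times(\beta\times H)))\times H+(\nabla\times H)\times(\nabla\times(\beta\times H))$, with principal symbol $p_2(x;\tau,\xi)=(\rho\tau^2-(H\cdot\xi)^2)\operatorname{Id}_3-(\gamma p+|H|^2)\xi\otimes\xi+(H\cdot\xi)(\xi\otimes H+H\otimes\xi)$. Assume $c^2=\gamma p/\rho>0$, $0<|H|^2\ne\rho c^2$, $\xi\cdot H\ne0$ and $\xi\times H\neq0$. Then the characteristic variety $\{\det p_2=0\}$ of $P$ is the disjoint union of $\{q_1=0\}$, $\{q_2=0\}$, $\{q_3=0\}$, where $q_1=\rho\tau^2-(H\cdot\xi)^2$, $q_2=\rho(\tau^2-c_s^2(x,\xi))$, $q_3=\rho(\tau^2-c_f^2(x,\xi))$ with $c_f^2(x,\xi)=\tfrac12\big((c^2+h^2)|\xi|^2+\sqrt{(c^2-h^2)^2|\xi|^4+4b^2c^2|\xi|^2}\big)$, $c_s^2(x,\xi)=\tfrac12\big((c^2+h^2)|\xi|^2-\sqrt{(c^2-h^2)^2|\xi|^4+4b^2c^2|\xi|^2}\big)$, $h^2=|H|^2/\rho$, $b^2=|\xi\times H|^2/\rho$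.
   Context: $(\tau,\xi)$ are dual to $(t,x)$; principal symbols are taken with the convention $\partial\mapsto i\xi$ (so $\partial_t\mapsto i\tau$). The inequalities $\xi\cdot H\neq0$, $\xi\times H\ne0$ are imposed at the points $(t,x;\tau,\xi)$ considered, with $H=H(x)$. *)

theory Defs
  imports "HOL-Analysis.Analysis" "HOL-Analysis.Cross3"
begin

fun pdir :: "(real^3 \<Rightarrow> real) \<Rightarrow> (real^3) list \<Rightarrow> real^3 \<Rightarrow> real" where
  "pdir f [] = f"
| "pdir f (v # vs) = (\<lambda>x. deriv (\<lambda>s. pdir f vs (x + s *\<^sub>R v)) 0)"

definition smooth_fun :: "(real^3 \<Rightarrow> real) \<Rightarrow> bool" where
  "smooth_fun f \<longleftrightarrow>
     (\<forall>vs. continuous_on UNIV (pdir f vs) \<and>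
           (\<forall>v x. (\<lambda>s. pdir f vs (x + s *\<^sub>R v)) differentiable (at 0)))"

definition smooth_vfun :: "(real^3 \<Rightarrow> real^3) \<Rightarrow> bool" where
  "smooth_vfun F \<longleftrightarrow> (\<forall>i. smooth_fun (\<lambda>x. F x $ i))"

definition p2 :: "real \<Rightarrow> (real^3 \<Rightarrow> real) \<Rightarrow> (real^3 \<Rightarrow> real) \<Rightarrow> (real^3 \<Rightarrow> real^3)
                  \<Rightarrow> real^3 \<Rightarrow> real \<Rightarrow> real^3 \<Rightarrow> real^3^3" where
  "p2 \<gamma> \<rho> p H x \<tau> \<xi> = (\<chi> i j.
      (\<rho> x * \<tau>^2 - (H x \<bullet> \<xi>)^2) * (if i = j then 1 else 0)
      - (\<gamma> * p x + (norm (H x))^2) * (\<xi> $ i * \<xi> $ j)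
      + (H x \<bullet> \<xi>) * (\<xi> $ i * H x $ j + H x $ i * \<xi> $ j))"

definition csq :: "real \<Rightarrow> (real^3 \<Rightarrow> real) \<Rightarrow> (real^3 \<Rightarrow> real) \<Rightarrow> real^3 \<Rightarrow> real" where
  "csq \<gamma> \<rho> p x = \<gamma> * p x / \<rho> x"

definition hsq :: "(real^3 \<Rightarrow> real) \<Rightarrow> (real^3 \<Rightarrow> real^3) \<Rightarrow> real^3 \<Rightarrow> real" where
  "hsq \<rho> H x = (norm (H x))^2 / \<rho> x"

definition bsq :: "(real^3 \<Rightarrow> real) \<Rightarrow> (real^3 \<Rightarrow> real^3) \<Rightarrow> real^3 \<Rightarrow> real^3 \<Rightarrow> real" where
  "bsq \<rho> H x \<xi> = (norm (cross3 \<xi> (H x)))^2 / \<rho> x"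

definition cfsq where
  "cfsq \<gamma> \<rho> p H x \<xi> = (1/2) * ((csq \<gamma> \<rho> p x + hsq \<rho> H x) * (norm \<xi>)^2
     + sqrt ((csq \<gamma> \<rho> p x - hsq \<rho> H x)^2 * (norm \<xi>)^4
             + 4 * bsq \<rho> H x \<xi> * csq \<gamma> \<rho> p x * (norm \<xi>)^2))"

definition cssq where
  "cssq \<gamma> \<rho> p H x \<xi> = (1/2) * ((csq \<gamma> \<rho> p x + hsq \<rho> H x) * (norm \<xi>)^2
     - sqrt ((csq \<gamma> \<rho> p x - hsq \<rho> H x)^2 * (norm \<xi>)^4
             + 4 * bsq \<rho> H x \<xi> * csq \<gamma> \<rho> p x * (norm \<xi>)^2))"

definition q1 where "q1 \<rho> H x \<tau> \<xi> = \<rho> x * \<tau>^2 - (H x \<bullet> \<xi>)^2"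
definition q2 where "q2 \<gamma> \<rho> p H x \<tau> \<xi> = \<rho> x * (\<tau>^2 - cssq \<gamma> \<rho> p H x \<xi>)"
definition q3 where "q3 \<gamma> \<rho> p H x \<tau> \<xi> = \<rho> x * (\<tau>^2 - cfsq \<gamma> \<rho> p H x \<xi>)"

end

theory Submission
  imports Defs
begin

lemma poly:
  fixes sv A a n x1 x2 x3 h1 h2 h3 r g t :: real
  assumes "sv = x1 * h1+x2 * h2+x3 * h3" and "A = r * t * t - sv * sv" and "a = g + (h1 * h1+h2 * h2+h3 * h3)"
    and "n = x1 * x1+x2 * x2+x3 * x3"
  shows "(A - a * x1 * x1 + sv * (x1 * h1+h1 * x1)) * (A - a * x2 * x2 + sv * (x2 * h2+h2 * x2)) * (A - a * x3 * x3 + sv * (x3 * h3+h3 * x3))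
   + (- a * x1 * x2 + sv * (x1 * h2+h1 * x2)) * (- a * x2 * x3 + sv * (x2 * h3+h2 * x3)) * (- a * x3 * x1 + sv * (x3 * h1+h3 * x1))
   + (- a * x1 * x3 + sv * (x1 * h3+h1 * x3)) * (- a * x2 * x1 + sv * (x2 * h1+h2 * x1)) * (- a * x3 * x2 + sv * (x3 * h2+h3 * x2))
   - (A - a * x1 * x1 + sv * (x1 * h1+h1 * x1)) * (- a * x2 * x3 + sv * (x2 * h3+h2 * x3)) * (- a * x3 * x2 + sv * (x3 * h2+h3 * x2))
   - (- a * x1 * x2 + sv * (x1 * h2+h1 * x2)) * (- a * x2 * x1 + sv * (x2 * h1+h2 * x1)) * (A - a * x3 * x3 + sv * (x3 * h3+h3 * x3))
   - (- a * x1 * x3 + sv * (x1 * h3+h1 * x3)) * (A - a * x2 * x2 + sv * (x2 * h2+h2 * x2)) * (- a * x3 * x1 + sv * (x3 * h1+h3 * x1))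
   = A * (r * r * t * t * t * t - a * n * r * t * t + g * sv * sv * n)"
  unfolding assms(2,3,4) unfolding assms(1) by algebra

lemma vieta: "(X - (1/2) * (a - q)) * (X - (1/2) * (a + q)) = X^2 - a * X + (a^2 - q^2)/(4::real)"
  by (simp add: algebra_simps power2_eq_square divide_simps)

lemma quad:
  fixes r c n Hn sv Bc X :: real
  assumes r: "r > 0" and lag: "Bc + sv^2 = n * Hn"
  defines "D \<equiv> (c - Hn/r)^2 * n^2 + 4 * (Bc/r) * c * n"
  assumes D: "D \<ge> 0"
  shows "r^2 * X^2 - (c * r + Hn) * n * r * X + c * r * sv^2 * n
     = r^2 * (X - (1/2) * ((c + Hn/r) * n - sqrt D)) * (X - (1/2) * ((c + Hn/r) * n + sqrt D))"
proof -
  have sq: "(sqrt D)^2 = D" using D by simp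
  have "(X - (1/2) * ((c + Hn/r) * n - sqrt D)) * (X - (1/2) * ((c + Hn/r) * n + sqrt D))
      = X^2 - (c + Hn/r) * n * X + (((c + Hn/r) * n)^2 - (sqrt D)^2)/4"
    by (rule vieta)
  also have "(((c + Hn/r) * n)^2 - (sqrt D)^2)/4 = c * n * (n * Hn - Bc)/r"
  proof -
    have "((c + Hn/r) * n)^2 - D = 4 * (c * n * (n * Hn - Bc)/r)"
      unfolding D_def using r by (simp add: field_simps power2_eq_square)
    then show ?thesis unfolding sq by simp
  qed
  also have "n * Hn - Bc = sv^2" using lag by simp
  finally have e: "(X - (1/2) * ((c + Hn/r) * n - sqrt D)) * (X - (1/2) * ((c + Hn/r) * n + sqrt D))
      = X^2 - (c + Hn/r) * n * X + c * n * sv^2/r" by simp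
  show ?thesis unfolding mult.assoc[symmetric, of "r^2"] 
    by (simp only: mult.assoc e) (use r in \<open>simp add: field_simps power2_eq_square\<close>)
qed

lemma detp2:
  fixes \<xi> :: "real^3"
  shows "det (p2 \<gamma> \<rho> p H x \<tau> \<xi>) = (\<rho> x * \<tau>*\<tau> - (H x \<bullet> \<xi>) * (H x \<bullet> \<xi>)) *
     (\<rho> x * \<rho> x * \<tau>*\<tau>*\<tau>*\<tau> - (\<gamma> * p x + (norm (H x))^2) * (norm \<xi>)^2 * \<rho> x * \<tau>*\<tau>
      + (\<gamma> * p x) * (H x \<bullet> \<xi>) * (H x \<bullet> \<xi>) * (norm \<xi>)^2)"
proof -
  define M where "M = p2 \<gamma> \<rho> p H x \<tau> \<xi>"
  define x1 where "x1 = \<xi>$1"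
  define x2 where "x2 = \<xi>$2"
  define x3 where "x3 = \<xi>$3"
  define h1 where "h1 = H x$1"
  define h2 where "h2 = H x$2"
  define h3 where "h3 = H x$3"
  define sv where "sv = H x \<bullet> \<xi>"
  define A where "A = \<rho> x * \<tau>*\<tau> - sv * sv"
  define a where "a = \<gamma> * p x + (norm (H x))^2"
  define n where "n = (norm \<xi>)^2"
  have sv': "sv = x1 * h1+x2 * h2+x3 * h3"
    unfolding sv_def x1_def x2_def x3_def h1_def h2_def h3_def by (simp add: inner_vec_def sum_3 mult.commute)
  have a': "a = \<gamma> * p x + (h1 * h1+h2 * h2+h3 * h3)"
    unfolding a_def h1_def h2_def h3_def power2_norm_eq_inner by (simp add: inner_vec_def sum_3)
  have n': "n = x1 * x1+x2 * x2+x3 * x3"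
    unfolding n_def x1_def x2_def x3_def power2_norm_eq_inner by (simp add: inner_vec_def sum_3)
  have e: "M$1$1 = A - a * x1 * x1 + sv * (x1 * h1+h1 * x1)" "M$2$2 = A - a * x2 * x2 + sv * (x2 * h2+h2 * x2)"
    "M$3$3 = A - a * x3 * x3 + sv * (x3 * h3+h3 * x3)"
    "M$1$2 = - a * x1 * x2 + sv * (x1 * h2+h1 * x2)" "M$2$3 = - a * x2 * x3 + sv * (x2 * h3+h2 * x3)"
    "M$3$1 = - a * x3 * x1 + sv * (x3 * h1+h3 * x1)" "M$1$3 = - a * x1 * x3 + sv * (x1 * h3+h1 * x3)"
    "M$2$1 = - a * x2 * x1 + sv * (x2 * h1+h2 * x1)" "M$3$2 = - a * x3 * x2 + sv * (x3 * h2+h3 * x2)"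
    unfolding M_def p2_def A_def a_def sv_def x1_def x2_def x3_def h1_def h2_def h3_def
    by (simp_all add: power2_eq_square algebra_simps)
  have "det M = A * (\<rho> x * \<rho> x * \<tau>*\<tau>*\<tau>*\<tau> - a * n * \<rho> x * \<tau>*\<tau> + (\<gamma> * p x) * sv * sv * n)"
    unfolding det_3 e
    by (rule poly[OF sv' _ a' n']) (simp add: A_def)
  then show ?thesis unfolding M_def A_def a_def n_def sv_def .
qed

lemma key:
  fixes \<rho> p :: "real^3 \<Rightarrow> real" and H :: "real^3 \<Rightarrow> real^3" and \<gamma> :: real
  assumes r: "\<rho> x > 0" and c: "csq \<gamma> \<rho> p x > 0"
    and sH: "\<xi> \<bullet> H x \<noteq> 0" and cH: "cross3 \<xi> (H x) \<noteq> 0"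
  shows "(det (p2 \<gamma> \<rho> p H x \<tau> \<xi>) = 0 \<longleftrightarrow>
           q1 \<rho> H x \<tau> \<xi> = 0 \<or> q2 \<gamma> \<rho> p H x \<tau> \<xi> = 0 \<or> q3 \<gamma> \<rho> p H x \<tau> \<xi> = 0)
     \<and> \<not> (q1 \<rho> H x \<tau> \<xi> = 0 \<and> q2 \<gamma> \<rho> p H x \<tau> \<xi> = 0)
     \<and> \<not> (q1 \<rho> H x \<tau> \<xi> = 0 \<and> q3 \<gamma> \<rho> p H x \<tau> \<xi> = 0)
     \<and> \<not> (q2 \<gamma> \<rho> p H x \<tau> \<xi> = 0 \<and> q3 \<gamma> \<rho> p H x \<tau> \<xi> = 0)"
proof -
  define rr where "rr = \<rho> x"
  define cc where "cc = csq \<gamma> \<rho> p x"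
  define Hn where "Hn = (norm (H x))^2"
  define sv where "sv = H x \<bullet> \<xi>"
  define Bc where "Bc = (norm (cross3 \<xi> (H x)))^2"
  define n where "n = (norm \<xi>)^2"
  define X where "X = \<tau>^2"
  define D where "D = (cc - Hn/rr)^2 * n^2 + 4 * (Bc/rr) * cc * n"
  have rr: "rr > 0" using r rr_def by simp
  have g: "\<gamma> * p x = cc * rr" unfolding cc_def rr_def csq_def using r by simp
  have lag: "Bc + sv^2 = n * Hn"
    using norm_cross_dot[of \<xi> "H x"] unfolding Bc_def sv_def n_def Hn_def
    by (simp add: inner_commute power_mult_distrib)
  have sv0: "sv \<noteq> 0" using sH by (simp add: sv_def inner_commute)
  have "\<xi> \<noteq> 0" using sH by auto
  then have n0: "n > 0" unfolding n_def by simp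
  have B0: "Bc > 0" using cH unfolding Bc_def by simp
  have cc0: "cc > 0" using c cc_def by simp
  have D0: "D > 0" unfolding D_def
    by (intro add_nonneg_pos) (use rr n0 B0 cc0 in auto)
  define cs where "cs = (1/2) * ((cc + Hn/rr) * n - sqrt D)"
  define cf where "cf = (1/2) * ((cc + Hn/rr) * n + sqrt D)"
  have n4: "(norm \<xi>)^4 = n^2" unfolding n_def by simp
  have cs': "cssq \<gamma> \<rho> p H x \<xi> = cs"
    unfolding cssq_def cs_def D_def n4 hsq_def bsq_def
    by (simp add: cc_def rr_def Hn_def Bc_def n_def)
  have cf': "cfsq \<gamma> \<rho> p H x \<xi> = cf"
    unfolding cfsq_def cf_def D_def n4 hsq_def bsq_def
    by (simp add: cc_def rr_def Hn_def Bc_def n_def)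
  have Q: "rr^2 * X^2 - (cc * rr + Hn) * n * rr * X + cc * rr * sv^2 * n = rr^2 * (X - cs) * (X - cf)"
    unfolding cs_def cf_def D_def by (rule quad[OF rr lag]) (use D0 D_def in simp)
  have det: "det (p2 \<gamma> \<rho> p H x \<tau> \<xi>) = (rr * X - sv^2) * (rr^2 * (X - cs) * (X - cf))"
    unfolding detp2 Q[symmetric] g[symmetric]
    by (simp add: rr_def X_def sv_def Hn_def n_def power2_eq_square power4_eq_xxxx algebra_simps)
  have q1: "q1 \<rho> H x \<tau> \<xi> = rr * X - sv^2" unfolding q1_def rr_def X_def sv_def by simp
  have q2: "q2 \<gamma> \<rho> p H x \<tau> \<xi> = rr * (X - cs)" unfolding q2_def cs' rr_def X_def by simp
  have q3: "q3 \<gamma> \<rho> p H x \<tau> \<xi> = rr * (X - cf)" unfolding q3_def cf' rr_def X_def by simp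
  have csf: "cs \<noteq> cf" unfolding cs_def cf_def using D0 by simp
  have nq: "rr^2 * (X - cs) * (X - cf) \<noteq> 0" if h: "rr * X - sv^2 = 0"
  proof -
    have "rr^2 * X^2 - (cc * rr + Hn) * n * rr * X + cc * rr * sv^2 * n = 0 - Bc * sv^2"
      using h lag by algebra
    moreover have "0 - Bc * sv^2 \<noteq> 0" using sv0 B0 by simp
    ultimately show ?thesis using Q by simp
  qed
  show ?thesis
    unfolding det q1 q2 q3 using nq csf rr by auto
qed

theorem lemma5p1:
  fixes \<rho> p :: "real^3 \<Rightarrow> real" and H :: "real^3 \<Rightarrow> real^3" and \<gamma> :: real
  assumes "smooth_fun \<rho>" and "smooth_fun p" and "smooth_vfun H"
    and "\<forall>x. \<rho> x > 0"
    and "\<forall>x. csq \<gamma> \<rho> p x > 0"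
    and "\<forall>x. 0 < (norm (H x))^2 \<and> (norm (H x))^2 \<noteq> \<rho> x * csq \<gamma> \<rho> p x"
  defines "CharVar \<equiv> {((t :: real, x), (\<tau> :: real, \<xi>)).
              \<xi> \<bullet> H x \<noteq> 0 \<and> cross3 \<xi> (H x) \<noteq> 0 \<and> det (p2 \<gamma> \<rho> p H x \<tau> \<xi>) = 0}"
    and "Z1 \<equiv> {((t :: real, x), (\<tau> :: real, \<xi>)).
              \<xi> \<bullet> H x \<noteq> 0 \<and> cross3 \<xi> (H x) \<noteq> 0 \<and> q1 \<rho> H x \<tau> \<xi> = 0}"
    and "Z2 \<equiv> {((t :: real, x), (\<tau> :: real, \<xi>)).
              \<xi> \<bullet> H x \<noteq> 0 \<and> cross3 \<xi> (H x) \<noteq> 0 \<and> q2 \<gamma> \<rho> p H x \<tau> \<xi> = 0}"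
    and "Z3 \<equiv> {((t :: real, x), (\<tau> :: real, \<xi>)).
              \<xi> \<bullet> H x \<noteq> 0 \<and> cross3 \<xi> (H x) \<noteq> 0 \<and> q3 \<gamma> \<rho> p H x \<tau> \<xi> = 0}"
  shows "CharVar = Z1 \<union> Z2 \<union> Z3 \<and> Z1 \<inter> Z2 = {} \<and> Z1 \<inter> Z3 = {} \<and> Z2 \<inter> Z3 = {}"
proof -
  note k = key[OF assms(4)[rule_format] assms(5)[rule_format]]
  show ?thesis
    unfolding CharVar_def Z1_def Z2_def Z3_def
    using k by (auto 0 3)
qed

end
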